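(* Let $r\geq 1$, let $\mathbf a=(a_1,\ldots,a_r)$ be positive integers, and let $D$ be a positive common multiple of $a_1,\ldots,a_r$. Then for every integer $n\geq 0$, $$f_{\mathbf a}(n) = \frac{1}{(r-1)!} \sum_{j=0}^{\lfloor n/D\rfloor } \binom{r}{j}(-1)^j \sum_{\substack{0\leq j_1\leq \frac{D}{a_1}-1,\ldots, 0\leq j_r\leq \frac{D}{a_r}-1 \\ a_1j_1+\cdots+a_rj_r \equiv n \pmod D}} \prod_{\ell=1}^{r-1} \left(\frac{n-a_1j_{1}- \cdots -a_rj_r}{D}+\ell-j\right),$$ where the inner sum runs over integer tuples $(j_1,\ldots,j_r)$.
   Context: For $n\geq 0$, $f_{\mathbf a}(n)$ denotes the number of integer tuples $(j_1,\ldots,j_r)$ with $a_1j_1+\cdots+a_rj_r=n$ and $0\leq j_k\leq \frac{D}{a_k}-1$ for $1\leq k\leq r$; equivalently, $\sum_{n\geq 0} f_{\mathbf a}(n)z^n=\prod_{i=1}^r\frac{1-z^D}{1-z^{a_i}}$. *)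

theory Defs
  imports "HOL-Analysis.Analysis"
begin

text \<open>Admissible tuples (j_1,...,j_r), represented as functions on {1..r}
  (extensional, value undefined outside), with 0 \<le> j_k \<le> D/a_k - 1.\<close>
definition tuples :: "nat \<Rightarrow> (nat \<Rightarrow> nat) \<Rightarrow> nat \<Rightarrow> (nat \<Rightarrow> nat) set" where
  "tuples r a D = PiE {1..r} (\<lambda>k. {0..<D div a k})"

definition f_a :: "nat \<Rightarrow> (nat \<Rightarrow> nat) \<Rightarrow> nat \<Rightarrow> nat \<Rightarrow> nat" where
  "f_a r a D n = card {j \<in> tuples r a D. (\<Sum>k=1..r. a k * j k) = n}"

end

theory Submission
  imports Defs "HOL-Computational_Algebra.Formal_Power_Series"
begin

lemma zeroP:
  fixes m :: int
  assumes "- (int r - 1) \<le> m" "m \<le> -1"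
  shows "(\<Prod>l = 1..r - 1. real_of_int m + real l) = 0"
proof -
  have "nat (-m) \<in> {1..r-1}" using assms by auto
  moreover have "real_of_int m + real (nat (-m)) = 0" using assms by simp
  ultimately show ?thesis by (metis (no_types, lifting) finite_atLeastAtMost prod_zero_iff)
qed

lemma posP0: "(\<Prod>l = 1..k. real m + real l) = fact (m + k) / fact m"
proof (induction k)
  case 0 then show ?case by simp
next
  case (Suc k)
  have "(\<Prod>l = 1..Suc k. real m + real l) = (\<Prod>l = 1..k. real m + real l) * (real m + real (Suc k))"
    by (simp add: prod.nat_ivl_Suc')
  also have "\<dots> = fact (m + k) / fact m * (real (m + k) + 1)" using Suc by simp
  also have "\<dots> = fact (Suc (m + k)) / fact m" by (simp add: algebra_simps)
  also have "\<dots> = fact (m + Suc k) / fact m" by simp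
  finally show ?case .
qed

lemma posP:
  assumes "r \<ge> 1"
  shows "(\<Prod>l = 1..r - 1. real m + real l) = fact (r - 1) * ((-1) ^ m * ((- real r) gchoose m))"
proof -
  have "(-1) ^ m * ((- real r) gchoose m) = (real r + real m - 1) gchoose m"
    by (simp add: gbinomial_minus)
  also have "real r + real m - 1 = real (m + (r - 1))" using assms by simp
  also have "(real (m + (r - 1)) gchoose m) = real ((m + (r-1)) choose m)"
    by (simp add: binomial_gbinomial)
  also have "\<dots> = fact (m + (r - 1)) / (fact m * fact (r - 1))"
    by (simp add: binomial_fact)
  finally have e: "(-1) ^ m * ((- real r) gchoose m) = fact (m + (r - 1)) / (fact m * fact (r - 1))" .
  show ?thesis unfolding e posP0 by simp
qed

lemma keyK:
  fixes q :: int and N r :: nat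
  assumes r: "r \<ge> 1" and qN: "q \<le> int N" and Nq: "int N - q \<le> int r - 1"
  shows "(\<Sum>j = 0..N. real (r choose j) * (-1) ^ j *
           (\<Prod>l = 1..r - 1. real_of_int q + real l - real j)) = (if q = 0 then fact (r - 1) else 0)"
proof (cases "q < 0")
  case True
  have zz: "\<forall>j \<in> {0..N}. real (r choose j) * (-1) ^ j *
           (\<Prod>l = 1..r - 1. real_of_int q + real l - real j) = 0"
  proof
    fix j assume that: "j \<in> {0..N}"
    have "(\<Prod>l = 1..r - 1. real_of_int q + real l - real j) = (\<Prod>l = 1..r - 1. real_of_int (q - int j) + real l)"
      by (intro prod.cong) auto
    also have "\<dots> = 0" using that True Nq by (intro zeroP) auto
    finally show "real (r choose j) * (-1) ^ j *
           (\<Prod>l = 1..r - 1. real_of_int q + real l - real j) = 0" by simp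
  qed
  show ?thesis using True sum.neutral[OF zz] by simp
next
  case False
  then obtain Q where Q: "q = int Q" by (metis nonneg_int_cases not_less)
  have QN: "Q \<le> N" using qN Q by simp
  have z: "real (r choose j) * (-1) ^ j * (\<Prod>l = 1..r - 1. real_of_int q + real l - real j) = 0"
    if "j \<in> {Q<..N}" for j
  proof -
    have "(\<Prod>l = 1..r - 1. real_of_int q + real l - real j) = (\<Prod>l = 1..r - 1. real_of_int (q - int j) + real l)"
      by (intro prod.cong) auto
    also have "\<dots> = 0" using that Q Nq by (intro zeroP) auto
    finally show ?thesis by simp
  qed
  have zs: "(\<Sum>j\<in>{Q<..N}. real (r choose j) * (-1) ^ j * (\<Prod>l = 1..r - 1. real_of_int q + real l - real j)) = 0"
    by (intro sum.neutral ballI z)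
  have split: "{0..N} = {0..Q} \<union> {Q<..N}" using QN by auto
  have "(\<Sum>j = 0..N. real (r choose j) * (-1) ^ j *
           (\<Prod>l = 1..r - 1. real_of_int q + real l - real j))
      = (\<Sum>j = 0..Q. real (r choose j) * (-1) ^ j *
           (\<Prod>l = 1..r - 1. real_of_int q + real l - real j))"
    using zs unfolding split by (subst sum.union_disjoint) auto
  also have "\<dots> = (\<Sum>j = 0..Q. fact (r - 1) * (-1) ^ Q * ((real r gchoose j) * ((- real r) gchoose (Q - j))))"
  proof (intro sum.cong refl)
    fix j assume j: "j \<in> {0..Q}"
    have "(\<Prod>l = 1..r - 1. real_of_int q + real l - real j) = (\<Prod>l = 1..r - 1. real (Q - j) + real l)"
      using j Q by (intro prod.cong) auto
    also have "\<dots> = fact (r - 1) * ((-1) ^ (Q - j) * ((- real r) gchoose (Q - j)))"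
      using r by (rule posP)
    finally have "(\<Prod>l = 1..r - 1. real_of_int q + real l - real j) = \<dots>" .
    moreover have "(-1::real) ^ j * (-1) ^ (Q - j) = (-1) ^ Q"
      using j by (simp add: power_add[symmetric])
    moreover have "real (r choose j) = real r gchoose j" by (simp add: binomial_gbinomial)
    ultimately show "real (r choose j) * (-1) ^ j * (\<Prod>l = 1..r - 1. real_of_int q + real l - real j)
      = fact (r - 1) * (-1) ^ Q * ((real r gchoose j) * ((- real r) gchoose (Q - j)))"
      by (metis (no_types, lifting) mult.assoc mult.left_commute)
  qed
  also have "\<dots> = fact (r - 1) * (-1) ^ Q * ((real r + - real r) gchoose Q)"
    by (simp add: sum_distrib_left[symmetric] gbinomial_Vandermonde)
  also have "\<dots> = (if q = 0 then fact (r - 1) else 0)"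
    using Q by (simp add: gbinomial_0_left)
  finally show ?thesis .
qed

lemma card_eq_sum_if: "finite A \<Longrightarrow> real (card {x\<in>A. P x}) = (\<Sum>x\<in>A. if P x then 1 else 0)"
proof -
  assume "finite A"
  moreover have "{x\<in>A. P x} = A \<inter> Collect P" by auto
  ultimately show ?thesis by (simp add: sum.If_cases)
qed

theorem proposition2p1:
  fixes r D n :: nat and a :: "nat \<Rightarrow> nat"
  assumes "r \<ge> 1"
    and "\<And>k. k \<in> {1..r} \<Longrightarrow> a k > 0"
    and "D > 0"
    and "\<And>k. k \<in> {1..r} \<Longrightarrow> a k dvd D"
  shows "real (f_a r a D n) =
    1 / fact (r - 1) *
    (\<Sum>j = 0..n div D. real (r choose j) * (-1) ^ j *
       (\<Sum>t \<in> {t \<in> tuples r a D. (\<Sum>k=1..r. a k * t k) mod D = n mod D}.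
          (\<Prod>l = 1..r - 1.
             (real_of_int (int n - int (\<Sum>k=1..r. a k * t k)) / real D
              + real l - real j))))"
proof -
  define T where "T = tuples r a D"
  define s where "s t = (\<Sum>k=1..r. a k * t k)" for t :: "nat \<Rightarrow> nat"
  define S where "S = {t \<in> T. s t mod D = n mod D}"
  define N where "N = n div D"
  define q where "q t = (int n - int (s t)) div int D" for t
  have finT: "finite T" unfolding T_def tuples_def by (intro finite_PiE) auto
  have finS: "finite S" unfolding S_def using finT by simp
  have sbound: "s t < r * D" if "t \<in> T" for t
  proof -
    have "s t < (\<Sum>k=1..r. D)" unfolding s_def
    proof (rule sum_strict_mono)
      show "{1..r} \<noteq> {}" using assms(1) by simp
      fix k assume k: "k \<in> {1..r}"
      have tk: "t k < D div a k" using that k unfolding T_def tuples_def by (auto simp: PiE_iff)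
      have "a k * t k < a k * (D div a k)" using tk assms(2)[OF k] by simp
      also have "\<dots> = D" using assms(4)[OF k] by simp
      finally show "a k * t k < D" .
    qed simp
    then show ?thesis by simp
  qed
  have qeq: "int n - int (s t) = q t * int D" if "t \<in> S" for t
  proof -
    have "s t mod D = n mod D" using that unfolding S_def by simp
    then have "int D dvd int n - int (s t)"
      by (metis mod_eq_dvd_iff of_nat_mod)
    then show ?thesis unfolding q_def by simp
  qed
  have qbounds: "q t \<le> int N \<and> int N - q t \<le> int r - 1" if "t \<in> S" for t
  proof -
    have e: "int n - int (s t) = q t * int D" using qeq[OF that] .
    have st: "s t < r * D" using sbound that unfolding S_def by simp
    have n1: "N * D \<le> n" "n < N * D + D" unfolding N_def using assms(3)
      by (simp_all add: div_times_less_eq_dividend) (metis div_mult_mod_eq mod_less_divisor add_less_cancel_left)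
    have nN: "int N * int D \<le> int n" "int n < int N * int D + int D"
      using n1 by (simp_all add: of_nat_mult[symmetric] del: of_nat_mult)
    have "q t * int D \<le> int n" using e by simp
    hence "q t * int D < (int N + 1) * int D" using nN by (simp add: algebra_simps)
    hence a1: "q t < int N + 1" using assms(3) by (simp add: mult_less_cancel_right)
    have "q t * int D > int n - int r * int D" using e st by (simp add: of_nat_mult[symmetric] del: of_nat_mult)
    hence "(int N - int r) * int D < q t * int D" using nN by (simp add: algebra_simps)
    hence "int N - int r < q t" using assms(3) by (simp add: mult_less_cancel_right)
    with a1 show ?thesis by simp
  qed
  have RHS: "1 / fact (r - 1) *
    (\<Sum>j = 0..N. real (r choose j) * (-1) ^ j *
       (\<Sum>t \<in> S. (\<Prod>l = 1..r - 1. real_of_int (int n - int (s t)) / real D + real l - real j)))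
    = (\<Sum>t\<in>S. if s t = n then 1 else 0)"
  proof -
    have "1 / fact (r - 1) *
      (\<Sum>j = 0..N. real (r choose j) * (-1) ^ j *
       (\<Sum>t \<in> S. (\<Prod>l = 1..r - 1. real_of_int (int n - int (s t)) / real D + real l - real j)))
      = (\<Sum>t\<in>S. 1 / fact (r - 1) * (\<Sum>j = 0..N. real (r choose j) * (-1) ^ j *
          (\<Prod>l = 1..r - 1. real_of_int (q t) + real l - real j)))"
    proof -
      have "\<And>t j. t \<in> S \<Longrightarrow> real_of_int (int n - int (s t)) / real D = real_of_int (q t)"
        using qeq assms(3) by simp
      then show ?thesis
        by (simp add: sum_distrib_left sum.swap[of _ "{0..N}" S] cong: sum.cong)
    qed
    also have "\<dots> = (\<Sum>t\<in>S. if s t = n then 1 else 0)"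
    proof (intro sum.cong refl)
      fix t assume t: "t \<in> S"
      have "(\<Sum>j = 0..N. real (r choose j) * (-1) ^ j *
          (\<Prod>l = 1..r - 1. real_of_int (q t) + real l - real j)) = (if q t = 0 then fact (r - 1) else 0)"
        using qbounds[OF t] assms(1) by (intro keyK) auto
      moreover have "q t = 0 \<longleftrightarrow> s t = n" using qeq[OF t] assms(3) by auto
      ultimately show "1 / fact (r - 1) * (\<Sum>j = 0..N. real (r choose j) * (-1) ^ j *
          (\<Prod>l = 1..r - 1. real_of_int (q t) + real l - real j)) = (if s t = n then 1 else 0)"
        by simp
    qed
    finally show ?thesis .
  qed
  have "real (f_a r a D n) = real (card {t \<in> S. s t = n})"
  proof -
    have "{t \<in> S. s t = n} = {j \<in> tuples r a D. (\<Sum>k=1..r. a k * j k) = n}"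
      unfolding S_def T_def s_def by auto
    then show ?thesis unfolding f_a_def by simp
  qed
  also have "\<dots> = (\<Sum>t\<in>S. if s t = n then 1 else 0)" using finS by (rule card_eq_sum_if)
  finally show ?thesis using RHS unfolding S_def T_def s_def N_def by simp
qed

end
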